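(* Let $n\geq 1$, $m=\frac{n^2+n}{2}$, and let $z:\mathbb{R}^n\to\mathbb{R}^m$ be the map $z(x)=\begin{bmatrix}x_1^2 & x_1x_2 & \cdots & x_1x_n & x_2^2 & x_2x_3 & \cdots & x_n^2\end{bmatrix}^\top$ listing all quadratic monomials of $x$; write $w=z(x)$ and $w_\ell$ for its $\ell$-th entry. Let $E=E^\top\in\mathbb{R}^{n\times n}$ be positive definite, $\alpha>0$, and $\mathcal{E}_\alpha=\{x : x^\top E x\leq\alpha^2\}$. Let $p,q\in\{1,\dots,m\}$ be indices such that $w_pw_q=x_i^2x_jx_k$ (as polynomials in $x$) for some $i,j,k\in\{1,\dots,n\}$ with $j\neq k$. Let $S_{pq}=\bar e_p\bar e_q^\top+\bar e_q\bar e_p^\top\in\mathbb{R}^{m\times m}$. Then the following four quadratic constraints hold for all $x\in\mathcal{E}_\alpha$ with $w=z(x)$: (i) with $d=e_j+e_k$ and $W$ equal to either $(e_i^\top E^{-1}e_i)\,dd^\top$ or $(d^\top E^{-1}d)\,e_ie_i^\top$, $$\begin{bmatrix} x\\ w\end{bmatrix}^\top\begin{bmatrix}\alpha^2 W & 0\\ 0 & -S_{pq}\end{bmatrix}\begin{bmatrix} x\\ w\end{bmatrix}\geq 0;$$ (ii) with $d=e_j-e_k$ and $W$ equal to either $(e_i^\top E^{-1}e_i)\,dd^\top$ or $(d^\top E^{-1}d)\,e_ie_i^\top$, $$\begin{bmatrix} x\\ w\end{bmatrix}^\top\begin{bmatrix}\alpha^2 W & 0\\ 0 & S_{pq}\end{bmatrix}\begin{bmatrix}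 x\\ w\end{bmatrix}\geq 0.$$
   Context: $e_1,\dots,e_n$ denote the standard basis vectors of $\mathbb{R}^n$ and $\bar e_1,\dots,\bar e_m$ the standard basis vectors of $\mathbb{R}^m$. The index $i$ may coincide with $j$ or $k$. *)

theory Defs
  imports "Jordan_Normal_Form.Matrix"
begin

definition pos_def_mat :: "nat \<Rightarrow> real mat \<Rightarrow> bool" where
  "pos_def_mat n E \<longleftrightarrow> E \<in> carrier_mat n n \<and> transpose_mat E = E \<and>
     (\<forall>v \<in> carrier_vec n. v \<noteq> 0\<^sub>v n \<longrightarrow> v \<bullet> (E *\<^sub>v v) > 0)"

(* z(x): all quadratic monomials x_a x_b with a <= b, in the order
   x_1^2, x_1 x_2, ..., x_1 x_n, x_2^2, x_2 x_3, ..., x_n^2 (0-based indices here). *)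
definition zmap :: "real vec \<Rightarrow> real vec" where
  "zmap x = vec_of_list (concat (map (\<lambda>a. map (\<lambda>b. x $ a * x $ b) [a..<dim_vec x]) [0..<dim_vec x]))"

definition outer :: "real vec \<Rightarrow> real vec \<Rightarrow> real mat" where
  "outer u v = mat_of_cols (dim_vec u) [u] * mat_of_rows (dim_vec v) [v]"

definition Smat :: "nat \<Rightarrow> nat \<Rightarrow> nat \<Rightarrow> real mat" where
  "Smat m p q = outer (unit_vec m p) (unit_vec m q) + outer (unit_vec m q) (unit_vec m p)"

definition blockQF :: "real mat \<Rightarrow> real mat \<Rightarrow> real vec \<Rightarrow> real vec \<Rightarrow> real" where
  "blockQF A B x w = (x @\<^sub>v w) \<bullet>
     (four_block_mat A (0\<^sub>m (dim_vec x) (dim_vec w)) (0\<^sub>m (dim_vec w) (dim_vec x)) B *\<^sub>v (x @\<^sub>v w))"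

end

theory Submission
  imports Defs
begin

lemma bf_sum:
  fixes M :: "real mat"
  assumes "M \<in> carrier_mat d d" "u \<in> carrier_vec d" "v \<in> carrier_vec d"
  shows "u \<bullet> (M *\<^sub>v v) = (\<Sum>a<d. \<Sum>b<d. u$a * M$$(a,b) * v$b)"
  using assms unfolding scalar_prod_def mult_mat_vec_def
  by (auto simp: row_def sum_distrib_left mult.assoc lessThan_atLeast0 intro!: sum.cong)

lemma qf_sum:
  fixes M :: "real mat"
  assumes "M \<in> carrier_mat d d" "v \<in> carrier_vec d"
  shows "v \<bullet> (M *\<^sub>v v) = (\<Sum>a<d. \<Sum>b<d. v$a * M$$(a,b) * v$b)"
  using assms unfolding scalar_prod_def mult_mat_vec_def
  by (auto simp: row_def sum_distrib_left mult.assoc lessThan_atLeast0 intro!: sum.cong)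

lemma outer_idx:
  assumes "a < dim_vec u" "b < dim_vec v"
  shows "outer u v $$ (a,b) = u$a * v$b"
  using assms unfolding outer_def by (simp add: scalar_prod_def mat_of_cols_def mat_of_rows_def)

lemma outer_carrier: "outer u v \<in> carrier_mat (dim_vec u) (dim_vec v)"
  unfolding outer_def by auto

lemma qf_outer:
  assumes "u \<in> carrier_vec d" "v \<in> carrier_vec d" "x \<in> carrier_vec d"
  shows "x \<bullet> (outer u v *\<^sub>v x) = (u \<bullet> x) * (v \<bullet> x)"
proof -
  have "x \<bullet> (outer u v *\<^sub>v x) = (\<Sum>a<d. \<Sum>b<d. x$a * (u$a * v$b) * x$b)"
    using assms outer_carrier[of u v] by (simp add: qf_sum outer_idx)
  also have "\<dots> = (\<Sum>a<d. u$a * x$a) * (\<Sum>b<d. v$b * x$b)"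
    by (simp add: sum_product algebra_simps)
  finally show ?thesis using assms by (simp add: scalar_prod_def lessThan_atLeast0)
qed

lemma qf_smult:
  fixes A :: "real mat"
  assumes "A \<in> carrier_mat d d" "x \<in> carrier_vec d"
  shows "x \<bullet> ((c \<cdot>\<^sub>m A) *\<^sub>v x) = c * (x \<bullet> (A *\<^sub>v x))"
proof -
  have "x \<bullet> ((c \<cdot>\<^sub>m A) *\<^sub>v x) = (\<Sum>a<d. \<Sum>b<d. c * (x$a * A$$(a,b) * x$b))"
    using assms by (subst qf_sum[OF smult_carrier_mat[OF assms(1)] assms(2)])
      (intro sum.cong refl, auto simp: algebra_simps)
  also have "\<dots> = c * (x \<bullet> (A *\<^sub>v x))"
    by (simp add: qf_sum[OF assms] sum_distrib_left)
  finally show ?thesis .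
qed

lemma qf_add:
  fixes A :: "real mat"
  assumes "A \<in> carrier_mat d d" "B \<in> carrier_mat d d" "x \<in> carrier_vec d"
  shows "x \<bullet> ((A + B) *\<^sub>v x) = x \<bullet> (A *\<^sub>v x) + x \<bullet> (B *\<^sub>v x)"
proof -
  have "x \<bullet> ((A + B) *\<^sub>v x) = (\<Sum>a<d. \<Sum>b<d. x$a * A$$(a,b) * x$b + x$a * B$$(a,b) * x$b)"
    using assms by (subst qf_sum[OF add_carrier_mat[OF assms(2), of A] assms(3)])
      (intro sum.cong refl, auto simp: algebra_simps)
  also have "\<dots> = x \<bullet> (A *\<^sub>v x) + x \<bullet> (B *\<^sub>v x)"
    by (simp add: qf_sum[OF assms(1,3)] qf_sum[OF assms(2,3)] sum.distrib)
  finally show ?thesis .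
qed

lemma qf_uminus:
  fixes A :: "real mat"
  assumes "A \<in> carrier_mat d d" "x \<in> carrier_vec d"
  shows "x \<bullet> ((- A) *\<^sub>v x) = - (x \<bullet> (A *\<^sub>v x))"
proof -
  have "x \<bullet> ((- A) *\<^sub>v x) = (\<Sum>a<d. \<Sum>b<d. - (x$a * A$$(a,b) * x$b))"
    using assms by (subst qf_sum[OF uminus_carrier_mat[OF assms(1)] assms(2)])
      (intro sum.cong refl, auto simp: algebra_simps)
  also have "\<dots> = - (x \<bullet> (A *\<^sub>v x))"
    by (simp add: qf_sum[OF assms] sum_negf)
  finally show ?thesis .
qed

lemma qf_block:
  fixes A :: "real mat"
  assumes "A \<in> carrier_mat n n" "B \<in> carrier_mat m m" "x \<in> carrier_vec n" "w \<in> carrier_vec m"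
  shows "blockQF A B x w = x \<bullet> (A *\<^sub>v x) + w \<bullet> (B *\<^sub>v w)"
  using assms unfolding blockQF_def
  by (simp add: mult_mat_vec_split scalar_prod_append[of _ n _ m])

lemma zdim_aux: "(\<Sum>a<n. (n - a)) * 2 = n^2 + (n::nat)"
proof (induction n)
  case (Suc n)
  have "(\<Sum>a<Suc n. (Suc n - a)) = (\<Sum>a<n. (Suc n - a)) + 1"
    by simp
  also have "(\<Sum>a<n. (Suc n - a)) = (\<Sum>a<n. (n - a) + 1)"
    by (intro sum.cong refl) auto
  also have "\<dots> = (\<Sum>a<n. (n - a)) + n"
    by (simp only: sum.distrib[of "\<lambda>a. n - a" "\<lambda>a. 1"]) simp
  finally have "(\<Sum>a<Suc n. (Suc n - a)) = (\<Sum>a<n. (n - a)) + n + 1"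
    by simp
  then show ?case using Suc by (simp add: power2_eq_square algebra_simps)
qed simp

lemma zmap_dim: "dim_vec (zmap x) = (dim_vec x ^ 2 + dim_vec x) div 2"
proof -
  have "dim_vec (zmap x) = sum_list (map (\<lambda>a. dim_vec x - a) [0..<dim_vec x])"
    unfolding zmap_def by (simp add: length_concat o_def)
  also have "\<dots> = (\<Sum>a<dim_vec x. dim_vec x - a)"
    by (simp add: sum_list_distinct_conv_sum_set lessThan_atLeast0)
  finally show ?thesis using zdim_aux[of "dim_vec x"] by simp
qed

lemma cs_form:
  fixes d :: nat and M :: "nat \<Rightarrow> nat \<Rightarrow> real" and x y :: "nat \<Rightarrow> real"
  defines "F \<equiv> \<lambda>u v. \<Sum>a<d. \<Sum>b<d. u a * M a b * v b"
  assumes sym: "\<And>a b. a<d \<Longrightarrow> b<d \<Longrightarrow> M a b = M b a"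
  and psd: "\<And>v. F v v \<ge> 0"
  shows "(F x y)^2 \<le> F x x * F y y"
proof -
  have swap: "F y x = F x y"
    unfolding F_def by (subst sum.swap) (auto simp: sym mult.commute intro!: sum.cong)
  have exp: "F (\<lambda>a. x a - t * y a) (\<lambda>a. x a - t * y a) = F x x - 2 * t * F x y + t^2 * F y y" for t
  proof -
    have "F (\<lambda>a. x a - t * y a) (\<lambda>a. x a - t * y a) =
      (\<Sum>a<d. \<Sum>b<d. x a * M a b * x b - t * (x a * M a b * y b) - t * (y a * M a b * x b) + t^2 * (y a * M a b * y b))"
      unfolding F_def by (intro sum.cong refl) (simp add: algebra_simps power2_eq_square)
    also have "\<dots> = F x x - t * F x y - t * F y x + t^2 * F y y"
      unfolding F_def by (simp add: sum.distrib sum_subtractf sum_distrib_left)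
    finally show ?thesis using swap by simp
  qed
  have nn: "0 \<le> F x x - 2 * t * F x y + t^2 * F y y" for t
    using psd[of "\<lambda>a. x a - t * y a"] exp[of t] by simp
  have yy: "F y y \<ge> 0" using psd by simp
  show ?thesis
  proof (cases "F y y = 0")
    case True
    have "F x y = 0"
    proof (rule ccontr)
      assume ne: "F x y \<noteq> 0"
      have "0 \<le> F x x - 2 * ((F x x + 1) / (2 * F x y)) * F x y"
        using nn[of "(F x x + 1) / (2 * F x y)"] True by simp
      also have "\<dots> = -1" using ne by (simp add: field_simps)
      finally show False by simp
    qed
    then show ?thesis using True by simp
  next
    case False
    then have pos: "F y y > 0" using yy by simp
    have "0 \<le> F x x - 2 * (F x y / F y y) * F x y + (F x y / F y y)^2 * F y y"
      using nn by blast
    also have "\<dots> = F x x - (F x y)^2 / F y y"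
      using pos by (simp add: field_simps power2_eq_square)
    finally have "(F x y)^2 / F y y \<le> F x x" by simp
    then show ?thesis using pos by (simp add: field_simps mult.commute)
  qed
qed

lemma cs_vec:
  assumes pd: "pos_def_mat n E" and Ei: "Einv \<in> carrier_mat n n" and inv: "E * Einv = 1\<^sub>m n"
    and u: "u \<in> carrier_vec n" and x: "x \<in> carrier_vec n"
  shows "(u \<bullet> x)^2 \<le> (u \<bullet> (Einv *\<^sub>v u)) * (x \<bullet> (E *\<^sub>v x))"
    "u \<bullet> (Einv *\<^sub>v u) \<ge> 0"
proof -
  have E: "E \<in> carrier_mat n n" and tE: "transpose_mat E = E"
    and pdv: "\<And>v. v \<in> carrier_vec n \<Longrightarrow> v \<noteq> 0\<^sub>v n \<Longrightarrow> v \<bullet> (E *\<^sub>v v) > 0"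
    using pd unfolding pos_def_mat_def by auto
  have sym: "E $$ (a,b) = E $$ (b,a)" if "a < n" "b < n" for a b
  proof -
    have "E $$ (a,b) = transpose_mat E $$ (a,b)" using tE by simp
    also have "\<dots> = E $$ (b,a)" using that E by simp
    finally show ?thesis .
  qed
  define F where "F = (\<lambda>u v. \<Sum>a<n. \<Sum>b<n. u a * E $$ (a,b) * v b)"
  have Fv: "F (($) v) (($) w) = v \<bullet> (E *\<^sub>v w)" if "v \<in> carrier_vec n" "w \<in> carrier_vec n" for v w
    unfolding F_def using bf_sum[OF E that] by simp
  have psd: "F f f \<ge> 0" for f
  proof -
    have "F f f = F (($) (vec n f)) (($) (vec n f))"
      unfolding F_def by (intro sum.cong refl) auto
    also have "\<dots> = vec n f \<bullet> (E *\<^sub>v vec n f)" by (rule Fv) auto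
    also have "\<dots> \<ge> 0"
    proof (cases "vec n f = 0\<^sub>v n")
      case True then show ?thesis using E by simp
    next
      case False then show ?thesis using pdv[of "vec n f"] by fastforce
    qed
    finally show ?thesis .
  qed
  define y where "y = Einv *\<^sub>v u"
  have y: "y \<in> carrier_vec n" using Ei u unfolding y_def by simp
  have Ey: "E *\<^sub>v y = u"
  proof -
    have "E *\<^sub>v y = (E * Einv) *\<^sub>v u" unfolding y_def using E Ei u by simp
    then show ?thesis using inv u by simp
  qed
  have "(F (($) x) (($) y))^2 \<le> F (($) x) (($) x) * F (($) y) (($) y)"
    unfolding F_def by (rule cs_form[unfolded]) (auto simp: sym psd[unfolded F_def])
  moreover have "F (($) x) (($) y) = u \<bullet> x"
    using Fv[OF x y] Ey comm_scalar_prod[OF x u] by simp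
  moreover have "F (($) y) (($) y) = u \<bullet> (Einv *\<^sub>v u)"
    using Fv[OF y y] Ey comm_scalar_prod[OF y u] unfolding y_def by simp
  moreover have "F (($) x) (($) x) = x \<bullet> (E *\<^sub>v x)" using Fv[OF x x] .
  ultimately show "(u \<bullet> x)^2 \<le> (u \<bullet> (Einv *\<^sub>v u)) * (x \<bullet> (E *\<^sub>v x))"
    by (simp add: mult.commute)
  show "u \<bullet> (Einv *\<^sub>v u) \<ge> 0" using psd \<open>F (($) y) (($) y) = u \<bullet> (Einv *\<^sub>v u)\<close> by metis
qed

lemma qfW:
  assumes "d \<in> carrier_vec n" "x \<in> carrier_vec n"
  shows "x \<bullet> ((\<alpha>^2 \<cdot>\<^sub>m (c \<cdot>\<^sub>m outer d d)) *\<^sub>v x) = \<alpha>^2 * c * (d \<bullet> x)^2"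
proof -
  have O: "outer d d \<in> carrier_mat n n" using outer_carrier[of d d] assms by simp
  show ?thesis
    using qf_smult[OF smult_carrier_mat[OF O] assms(2), of "\<alpha>^2" c] qf_smult[OF O assms(2), of c]
      qf_outer[OF assms(1) assms(1) assms(2)] by (simp add: power2_eq_square)
qed

lemma ineq1:
  fixes K a s b :: real
  assumes "a^2 \<le> K" "s^2 \<ge> 2 * b"
  shows "K * s^2 - 2 * (a^2 * b) \<ge> 0"
proof -
  have "K * s^2 \<ge> a^2 * s^2" using assms by (simp add: mult_right_mono)
  moreover have "a^2 * s^2 \<ge> a^2 * (2 * b)" using assms by (simp add: mult_left_mono)
  ultimately show ?thesis by simp
qed

lemma ineq2:
  fixes K a s b :: real
  assumes "s^2 \<le> K" "s^2 \<ge> 2 * b"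
  shows "K * a^2 - 2 * (a^2 * b) \<ge> 0"
proof -
  have "K * a^2 \<ge> s^2 * a^2" using assms by (simp add: mult_right_mono)
  moreover have "a^2 * s^2 \<ge> a^2 * (2 * b)" using assms by (simp add: mult_left_mono)
  ultimately show ?thesis by (simp add: mult.commute)
qed

theorem theorem4:
  fixes n m p q i j k :: nat and E Einv :: "real mat" and \<alpha> :: real
  assumes "n \<ge> 1"
    and "m = (n^2 + n) div 2"
    and "pos_def_mat n E"
    and "Einv \<in> carrier_mat n n" and "E * Einv = 1\<^sub>m n"
    and "\<alpha> > 0"
    and "p < m" and "q < m"
    and "i < n" and "j < n" and "k < n" and "j \<noteq> k"
    and "\<forall>y \<in> carrier_vec n. zmap y $ p * zmap y $ q = (y $ i)^2 * y $ j * y $ k"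
  shows "\<forall>x \<in> carrier_vec n. x \<bullet> (E *\<^sub>v x) \<le> \<alpha>^2 \<longrightarrow>
    (let w = zmap x; ei = unit_vec n i;
         dp = unit_vec n j + unit_vec n k; dm = unit_vec n j - unit_vec n k;
         S = Smat m p q in
      blockQF (\<alpha>^2 \<cdot>\<^sub>m ((ei \<bullet> (Einv *\<^sub>v ei)) \<cdot>\<^sub>m outer dp dp)) (- S) x w \<ge> 0 \<and>
      blockQF (\<alpha>^2 \<cdot>\<^sub>m ((dp \<bullet> (Einv *\<^sub>v dp)) \<cdot>\<^sub>m outer ei ei)) (- S) x w \<ge> 0 \<and>
      blockQF (\<alpha>^2 \<cdot>\<^sub>m ((ei \<bullet> (Einv *\<^sub>v ei)) \<cdot>\<^sub>m outer dm dm)) S x w \<ge> 0 \<and>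
      blockQF (\<alpha>^2 \<cdot>\<^sub>m ((dm \<bullet> (Einv *\<^sub>v dm)) \<cdot>\<^sub>m outer ei ei)) S x w \<ge> 0)"
proof (intro ballI impI)
  fix x :: "real vec"
  assume x: "x \<in> carrier_vec n" and ell: "x \<bullet> (E *\<^sub>v x) \<le> \<alpha>^2"
  define w where "w = zmap x"
  define ei :: "real vec" where "ei = unit_vec n i"
  define dp :: "real vec" where "dp = unit_vec n j + unit_vec n k"
  define dm :: "real vec" where "dm = unit_vec n j - unit_vec n k"
  define S :: "real mat" where "S = Smat m p q"
  have w: "w \<in> carrier_vec m" using zmap_dim[of x] x assms(2) unfolding w_def carrier_vec_def by simp
  have ei: "ei \<in> carrier_vec n" and dp: "dp \<in> carrier_vec n" and dm: "dm \<in> carrier_vec n"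
    unfolding ei_def dp_def dm_def by auto
  have eix: "ei \<bullet> x = x $ i" unfolding ei_def using x assms(9) by simp
  have dpx: "dp \<bullet> x = x $ j + x $ k" unfolding dp_def
    using x assms(10,11) by (simp add: add_scalar_prod_distrib[of _ n])
  have dmx: "dm \<bullet> x = x $ j - x $ k" unfolding dm_def
    using x assms(10,11) by (simp add: minus_scalar_prod_distrib[of _ n])
  have Sc: "S \<in> carrier_mat m m" unfolding S_def Smat_def using outer_carrier
    by (metis add_carrier_mat index_unit_vec(3))
  have Sw: "w \<bullet> (S *\<^sub>v w) = 2 * ((x $ i)^2 * x $ j * x $ k)"
  proof -
    have o1: "outer (unit_vec m p) (unit_vec m q) \<in> carrier_mat m m"
     and o2: "outer (unit_vec m q) (unit_vec m p) \<in> carrier_mat m m"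
      using outer_carrier by (metis index_unit_vec(3))+
    have "w \<bullet> (S *\<^sub>v w) = 2 * (w $ p * w $ q)"
      unfolding S_def Smat_def
      using qf_add[OF o1 o2 w] qf_outer[of "unit_vec m p" m "unit_vec m q" w]
        qf_outer[of "unit_vec m q" m "unit_vec m p" w] w assms(7,8) by simp
    then show ?thesis using assms(13) x unfolding w_def by simp
  qed
  have mSw: "w \<bullet> ((- S) *\<^sub>v w) = - (2 * ((x $ i)^2 * x $ j * x $ k))"
    using qf_uminus[OF Sc w] Sw by simp
  have cs_i: "(x $ i)^2 \<le> \<alpha>^2 * (ei \<bullet> (Einv *\<^sub>v ei))"
  proof -
    have "(x $ i)^2 \<le> (ei \<bullet> (Einv *\<^sub>v ei)) * (x \<bullet> (E *\<^sub>v x))"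
      using cs_vec(1)[OF assms(3,4,5) ei x] eix by simp
    also have "\<dots> \<le> (ei \<bullet> (Einv *\<^sub>v ei)) * \<alpha>^2"
      using cs_vec(2)[OF assms(3,4,5) ei x] ell by (simp add: mult_left_mono)
    finally show ?thesis by (simp add: mult.commute)
  qed
  have cs_p: "(x $ j + x $ k)^2 \<le> \<alpha>^2 * (dp \<bullet> (Einv *\<^sub>v dp))"
  proof -
    have "(x $ j + x $ k)^2 \<le> (dp \<bullet> (Einv *\<^sub>v dp)) * (x \<bullet> (E *\<^sub>v x))"
      using cs_vec(1)[OF assms(3,4,5) dp x] dpx by simp
    also have "\<dots> \<le> (dp \<bullet> (Einv *\<^sub>v dp)) * \<alpha>^2"
      using cs_vec(2)[OF assms(3,4,5) dp x] ell by (simp add: mult_left_mono)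
    finally show ?thesis by (simp add: mult.commute)
  qed
  have cs_m: "(x $ j - x $ k)^2 \<le> \<alpha>^2 * (dm \<bullet> (Einv *\<^sub>v dm))"
  proof -
    have "(x $ j - x $ k)^2 \<le> (dm \<bullet> (Einv *\<^sub>v dm)) * (x \<bullet> (E *\<^sub>v x))"
      using cs_vec(1)[OF assms(3,4,5) dm x] dmx by simp
    also have "\<dots> \<le> (dm \<bullet> (Einv *\<^sub>v dm)) * \<alpha>^2"
      using cs_vec(2)[OF assms(3,4,5) dm x] ell by (simp add: mult_left_mono)
    finally show ?thesis by (simp add: mult.commute)
  qed
  have sq0: "0 \<le> (x $ j)^2 + (x $ k)^2" by simp
  have sp: "(x $ j + x $ k)^2 \<ge> 2 * (x $ j * x $ k)"
    using sq0 unfolding power2_sum by linarith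
  have sm: "(x $ j - x $ k)^2 \<ge> 2 * (- (x $ j * x $ k))"
    using sq0 unfolding power2_diff by linarith
  have Wc: "\<alpha>^2 \<cdot>\<^sub>m (c \<cdot>\<^sub>m outer d d) \<in> carrier_mat n n" if "d \<in> carrier_vec n" for c d
    using outer_carrier[of d d] that by auto
  have B: "blockQF (\<alpha>^2 \<cdot>\<^sub>m (c \<cdot>\<^sub>m outer d d)) T x w = \<alpha>^2 * c * (d \<bullet> x)^2 + w \<bullet> (T *\<^sub>v w)"
    if "d \<in> carrier_vec n" "T \<in> carrier_mat m m" for c d T
    using qf_block[OF Wc[OF that(1)] that(2) x w] qfW[OF that(1) x] by simp
  have 1: "blockQF (\<alpha>^2 \<cdot>\<^sub>m ((ei \<bullet> (Einv *\<^sub>v ei)) \<cdot>\<^sub>m outer dp dp)) (- S) x w \<ge> 0"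
    using B[OF dp uminus_carrier_mat[OF Sc]] mSw dpx
      ineq1[OF cs_i sp] by (simp add: mult.assoc)
  have 2: "blockQF (\<alpha>^2 \<cdot>\<^sub>m ((dp \<bullet> (Einv *\<^sub>v dp)) \<cdot>\<^sub>m outer ei ei)) (- S) x w \<ge> 0"
    using B[OF ei uminus_carrier_mat[OF Sc]] mSw eix
      ineq2[OF cs_p sp, of "x $ i"] by (simp add: mult.assoc)
  have 3: "blockQF (\<alpha>^2 \<cdot>\<^sub>m ((ei \<bullet> (Einv *\<^sub>v ei)) \<cdot>\<^sub>m outer dm dm)) S x w \<ge> 0"
    using B[OF dm Sc] Sw dmx
      ineq1[OF cs_i sm] by (simp add: mult.assoc)
  have 4: "blockQF (\<alpha>^2 \<cdot>\<^sub>m ((dm \<bullet> (Einv *\<^sub>v dm)) \<cdot>\<^sub>m outer ei ei)) S x w \<ge> 0"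
    using B[OF ei Sc] Sw eix
      ineq2[OF cs_m sm, of "x $ i"] by (simp add: mult.assoc)
  show "let w = zmap x; ei = unit_vec n i;
         dp = unit_vec n j + unit_vec n k; dm = unit_vec n j - unit_vec n k;
         S = Smat m p q in
      blockQF (\<alpha>^2 \<cdot>\<^sub>m ((ei \<bullet> (Einv *\<^sub>v ei)) \<cdot>\<^sub>m outer dp dp)) (- S) x w \<ge> 0 \<and>
      blockQF (\<alpha>^2 \<cdot>\<^sub>m ((dp \<bullet> (Einv *\<^sub>v dp)) \<cdot>\<^sub>m outer ei ei)) (- S) x w \<ge> 0 \<and>
      blockQF (\<alpha>^2 \<cdot>\<^sub>m ((ei \<bullet> (Einv *\<^sub>v ei)) \<cdot>\<^sub>m outer dm dm)) S x w \<ge> 0 \<and>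
      blockQF (\<alpha>^2 \<cdot>\<^sub>m ((dm \<bullet> (Einv *\<^sub>v dm)) \<cdot>\<^sub>m outer ei ei)) S x w \<ge> 0"
    using 1 2 3 4 unfolding Let_def w_def ei_def dp_def dm_def S_def by simp
qed

end
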